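(* Let $(X,\tau,\mathcal{I})$ be an ideal topological space such that $(X,\tau)$ is semi-Alexandroff, $(X,\tau,\mathcal{I})$ is a $T_{\mathcal{I}}$-space, and $\mathcal{I}$ is a $\tau$-boundary. If $(X,\tau)$ is resolvable, then $(X,\tau,\mathcal{I})$ is $\mathcal{I}$-resolvable.
   Context: An ideal on a topological space $(X,\tau)$ is a nonempty collection $\mathcal{I}$ of subsets of $X$ closed under taking subsets and finite unions. $(X,\tau,\mathcal{I})$ is a $T_{\mathcal{I}}$-space if for every $I\in\mathcal{I}$ and every $x\in X\setminus I$ there is a set $A_x$ with $x\in A_x$, $A_x\cap I=\emptyset$, and $A_x$ open or closed. A set is semi-open if it lies between an open set and that open set's closure; $(X,\tau)$ is semi-Alexandroff if every intersection of open sets is semi-open. $\mathcal{I}$ is a $\tau$-boundary if $\tau\cap\mathcal{I}=\{\emptyset\}$. For $A\subseteq X$, the local function is $A^*=\{x\in X: U\cap A\notin\mathcal{I}\text{ for every open }U\ni x\}$; $A$ is $\mathcal{I}$-dense if $A^*=X$. A nonempty space is resolvable if $X$ is the disjoint union of two dense subsets, and $(X,\tau,\mathcal{I})$ is $\mathcal{I}$-resolvable if $X$ is the disjoint union of two $\mathcal{I}$-dense subsets. *)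

theory Defs
  imports "HOL-Analysis.Analysis"
begin

definition is_ideal :: "'a topology \<Rightarrow> 'a set set \<Rightarrow> bool" where
  "is_ideal T I \<longleftrightarrow> I \<noteq> {} \<and> (\<forall>A\<in>I. A \<subseteq> topspace T)
     \<and> (\<forall>A\<in>I. \<forall>B. B \<subseteq> A \<longrightarrow> B \<in> I) \<and> (\<forall>A\<in>I. \<forall>B\<in>I. A \<union> B \<in> I)"

definition T_I_space :: "'a topology \<Rightarrow> 'a set set \<Rightarrow> bool" where
  "T_I_space T I \<longleftrightarrow> (\<forall>J\<in>I. \<forall>x\<in>topspace T - J. \<exists>A. x \<in> A \<and> A \<inter> J = {}
      \<and> (openin T A \<or> closedin T A))"

definition semi_openin :: "'a topology \<Rightarrow> 'a set \<Rightarrow> bool" where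
  "semi_openin T A \<longleftrightarrow> (\<exists>U. openin T U \<and> U \<subseteq> A \<and> A \<subseteq> T closure_of U)"

definition semi_Alexandroff :: "'a topology \<Rightarrow> bool" where
  "semi_Alexandroff T \<longleftrightarrow> (\<forall>\<U>. (\<forall>U\<in>\<U>. openin T U) \<longrightarrow> semi_openin T (topspace T \<inter> \<Inter>\<U>))"

definition tau_boundary :: "'a topology \<Rightarrow> 'a set set \<Rightarrow> bool" where
  "tau_boundary T I \<longleftrightarrow> {U. openin T U} \<inter> I = {{}}"

definition local_function :: "'a topology \<Rightarrow> 'a set set \<Rightarrow> 'a set \<Rightarrow> 'a set" where
  "local_function T I A = {x \<in> topspace T. \<forall>U. openin T U \<and> x \<in> U \<longrightarrow> U \<inter> A \<notin> I}"

definition I_dense :: "'a topology \<Rightarrow> 'a set set \<Rightarrow> 'a set \<Rightarrow> bool" where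
  "I_dense T I A \<longleftrightarrow> local_function T I A = topspace T"

definition resolvable :: "'a topology \<Rightarrow> bool" where
  "resolvable T \<longleftrightarrow> topspace T \<noteq> {} \<and> (\<exists>A B. A \<union> B = topspace T \<and> A \<inter> B = {}
      \<and> T closure_of A = topspace T \<and> T closure_of B = topspace T)"

definition I_resolvable :: "'a topology \<Rightarrow> 'a set set \<Rightarrow> bool" where
  "I_resolvable T I \<longleftrightarrow> (\<exists>A B. A \<union> B = topspace T \<and> A \<inter> B = {}
      \<and> I_dense T I A \<and> I_dense T I B)"

end

theory Submission
  imports Defs
begin

lemma key:
  fixes T :: "'a topology" and I :: "'a set set"
  assumes ideal: "is_ideal T I"
    and sa: "semi_Alexandroff T"
    and ti: "T_I_space T I"
    and tb: "tau_boundary T I"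
    and Dd: "T closure_of D = topspace T"
    and Ed: "T closure_of E = topspace T"
    and DE: "D \<union> E = topspace T" "D \<inter> E = {}"
    and W: "openin T W" "W \<noteq> {}"
  shows "W \<inter> D \<notin> I"
proof
  assume J: "W \<inter> D \<in> I"
  define J where "J = W \<inter> D"
  have JI: "J \<in> I" using J J_def by simp
  have Jne: "J \<noteq> {}" using Dd W unfolding J_def dense_intersects_open by blast
  have WE: "W \<inter> E \<noteq> {}" using Ed W unfolding dense_intersects_open by blast
  have ex: "\<exists>A. y \<in> A \<and> A \<inter> J = {} \<and> closedin T A" if y: "y \<in> W \<inter> E" for y
  proof -
    have "y \<in> topspace T - J" using y DE W openin_subset unfolding J_def by blast
    then obtain A where A: "y \<in> A" "A \<inter> J = {}" "openin T A \<or> closedin T A"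
      using ti JI unfolding T_I_space_def by blast
    have "\<not> openin T A"
    proof
      assume "openin T A"
      then have "openin T (A \<inter> W)" using W by auto
      moreover have "A \<inter> W \<noteq> {}" using A y by blast
      ultimately have "D \<inter> (A \<inter> W) \<noteq> {}" using Dd unfolding dense_intersects_open by blast
      then show False using A(2) unfolding J_def by blast
    qed
    then show ?thesis using A by blast
  qed
  define F where "F y = (SOME A. y \<in> A \<and> A \<inter> J = {} \<and> closedin T A)" for y
  have F: "y \<in> F y \<and> F y \<inter> J = {} \<and> closedin T (F y)" if "y \<in> W \<inter> E" for y
    unfolding F_def using someI_ex[OF ex[OF that]] .
  define U where "U = insert W ((\<lambda>y. topspace T - F y) ` (W \<inter> E))"
  have Uo: "\<forall>V\<in>U. openin T V" unfolding U_def using F W by auto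
  define V where "V = topspace T \<inter> \<Inter>U"
  have "semi_openin T V" using sa Uo unfolding semi_Alexandroff_def V_def by blast
  then obtain G0 where G0: "openin T G0" "G0 \<subseteq> V" "V \<subseteq> T closure_of G0"
    unfolding semi_openin_def by blast
  have VJ: "V \<subseteq> J"
  proof
    fix v assume v: "v \<in> V"
    then have vW: "v \<in> W" "v \<in> topspace T" unfolding V_def U_def by auto
    show "v \<in> J"
    proof (rule ccontr)
      assume "v \<notin> J"
      then have "v \<in> W \<inter> E" using vW DE unfolding J_def by blast
      then have "v \<in> F v" "topspace T - F v \<in> U" using F unfolding U_def by auto
      then show False using v unfolding V_def by blast
    qed
  qed
  have JV: "J \<subseteq> V"
  proof
    fix j assume j: "j \<in> J"
    have jt: "j \<in> topspace T" using j W openin_subset unfolding J_def by blast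
    have "j \<in> X" if "X \<in> U" for X
    proof -
      have "X = W \<or> (\<exists>y\<in>W \<inter> E. X = topspace T - F y)" using that unfolding U_def by blast
      then show ?thesis
      proof
        assume "X = W" then show ?thesis using j unfolding J_def by blast
      next
        assume "\<exists>y\<in>W \<inter> E. X = topspace T - F y"
        then obtain y where "y \<in> W \<inter> E" "X = topspace T - F y" by blast
        then show ?thesis using F[of y] j jt by blast
      qed
    qed
    then show "j \<in> V" unfolding V_def using jt by blast
  qed
  have "G0 \<subseteq> J" using G0(2) VJ by blast
  then have "G0 \<in> I" using JI ideal unfolding is_ideal_def by blast
  then have "G0 \<in> {U. openin T U} \<inter> I" using G0(1) by blast
  then have "G0 = {}" using tb unfolding tau_boundary_def by blast
  then have "V = {}" using G0(3) by simp
  then show False using JV Jne by blast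
qed

theorem mainTheorem2:
  fixes T :: "'a topology" and I :: "'a set set"
  assumes "is_ideal T I"
    and "semi_Alexandroff T"
    and "T_I_space T I"
    and "tau_boundary T I"
    and "resolvable T"
  shows "I_resolvable T I"
proof -
  obtain A B where AB: "A \<union> B = topspace T" "A \<inter> B = {}"
    "T closure_of A = topspace T" "T closure_of B = topspace T"
    using assms(5) unfolding resolvable_def by blast
  have "I_dense T I A"
    unfolding I_dense_def local_function_def
    using key[OF assms(1-4) AB(3) AB(4) AB(1) AB(2)] by (auto simp: Int_commute)
  moreover have "I_dense T I B"
    unfolding I_dense_def local_function_def
    using key[OF assms(1-4) AB(4) AB(3)] AB(1,2) by (auto simp: Int_commute Un_commute)
  ultimately show ?thesis using AB unfolding I_resolvable_def by blast
qed

end
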